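(* Let $p$ be a prime and $t\geq 2$. Then $\mathcal S(\mathbb Z_{p^t})\subseteq \mathcal S(\mathbb Z_{p^{t-1}})$, where $\mathcal S(\mathbb Z_n)$ denotes the set of determinants of $n\times n$ circulant matrices with integer entries. *)

theory Defs
  imports Main "HOL-Computational_Algebra.Primes" "Jordan_Normal_Form.Determinant"
begin

definition circulant :: "nat \<Rightarrow> (nat \<Rightarrow> int) \<Rightarrow> int mat" where
  "circulant n a = mat n n (\<lambda>(i, j). a ((j + n - i) mod n))"

definition circ_dets :: "nat \<Rightarrow> int set" where
  "circ_dets n = {det (circulant n a) | a. True}"

end

theory Submission
  imports Defs "Jordan_Normal_Form.Char_Poly" "HOL-Analysis.Complex_Transcendental"
begin

definition tw :: "nat \<Rightarrow> 'a::comm_ring_1 \<Rightarrow> (nat \<Rightarrow> 'a) \<Rightarrow> nat \<Rightarrow> nat \<Rightarrow> 'a" where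
  "tw n c b s r = (if s \<le> r then b (r - s) else c * b (r + n - s))"

lemma tw_eigen:
  fixes \<theta> :: "'a::comm_ring_1"
  assumes th: "\<theta> ^ n = c" and sn: "s < n"
  shows "(\<Sum>r<n. tw n c b s r * \<theta> ^ r) = \<theta> ^ s * (\<Sum>r<n. b r * \<theta> ^ r)"
proof -
  have split1: "{..<n} = {..<s} \<union> {s..<n}" using sn by auto
  have split2: "{..<n} = {..<n-s} \<union> {n-s..<n}" by auto
  have A: "(\<Sum>r\<in>{s..<n}. tw n c b s r * \<theta> ^ r) = (\<Sum>r\<in>{..<n-s}. \<theta>^s * (b r * \<theta> ^ r))"
  proof (rule sum.reindex_bij_witness[of _ "\<lambda>r. r + s" "\<lambda>r. r - s"])
    fix a assume "a \<in> {s..<n}"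
    then have "\<theta> ^ a = \<theta> ^ s * \<theta> ^ (a - s)"
      by (metis atLeastLessThan_iff le_add_diff_inverse power_add)
    then show "\<theta> ^ s * (b (a - s) * \<theta> ^ (a - s)) = tw n c b s a * \<theta> ^ a"
      using \<open>a \<in> {s..<n}\<close> by (simp add: tw_def algebra_simps)
  qed auto
  have B: "(\<Sum>r\<in>{..<s}. tw n c b s r * \<theta> ^ r) = (\<Sum>r\<in>{n-s..<n}. \<theta>^s * (b r * \<theta> ^ r))"
  proof (rule sum.reindex_bij_witness[of _ "\<lambda>r. r + s - n" "\<lambda>r. r + n - s"])
    fix a assume a: "a \<in> {..<s}"
    then have "\<theta> ^ s * \<theta> ^ (a + n - s) = \<theta> ^ (a + n)"
      using sn by (metis power_add add.commute le_add_diff_inverse less_imp_le_nat trans_le_add2 lessThan_iff)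
    also have "\<dots> = c * \<theta> ^ a" using th by (simp add: power_add)
    finally have e: "\<theta> ^ s * \<theta> ^ (a + n - s) = c * \<theta> ^ a" .
    have "\<theta> ^ s * (b (a + n - s) * \<theta> ^ (a + n - s)) = b (a + n - s) * (\<theta> ^ s * \<theta> ^ (a + n - s))"
      by (simp add: algebra_simps)
    also have "\<dots> = tw n c b s a * \<theta> ^ a" using a e by (simp add: tw_def algebra_simps)
    finally show "\<theta> ^ s * (b (a + n - s) * \<theta> ^ (a + n - s)) = tw n c b s a * \<theta> ^ a" .
  qed (use sn in auto)
  have "(\<Sum>r<n. tw n c b s r * \<theta> ^ r) = (\<Sum>r\<in>{..<s}. tw n c b s r * \<theta> ^ r) + (\<Sum>r\<in>{s..<n}. tw n c b s r * \<theta> ^ r)"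
    unfolding split1 by (rule sum.union_disjoint) auto
  also have "\<dots> = (\<Sum>r\<in>{..<n-s}. \<theta>^s * (b r * \<theta> ^ r)) + (\<Sum>r\<in>{n-s..<n}. \<theta>^s * (b r * \<theta> ^ r))"
    using A B by simp
  also have "\<dots> = (\<Sum>r<n. \<theta>^s * (b r * \<theta> ^ r))"
    unfolding split2 by (rule sum.union_disjoint[symmetric]) auto
  finally show ?thesis by (simp add: sum_distrib_left)
qed

lemma circ_tw: "i < n \<Longrightarrow> j < n \<Longrightarrow> circulant n a $$ (i,j) = tw n 1 a i j"
proof -
  assume ij: "i < n" "j < n"
  have e: "circulant n a $$ (i,j) = a ((j + n - i) mod n)"
    unfolding circulant_def using ij by simp
  show ?thesis
  proof (cases "i \<le> j")
    case True
    have "j + n - i = (j - i) + n" using True by simp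
    then have "(j + n - i) mod n = ((j - i) + n) mod n" by (rule arg_cong)
    also have "\<dots> = (j - i) mod n" by (simp only: mod_add_self2)
    also have "\<dots> = j - i" using ij(2) by simp
    finally show ?thesis using e True by (simp add: tw_def)
  next
    case False
    then have "j + n - i < n" using ij by simp
    then have "(j + n - i) mod n = j + n - i" by simp
    then show ?thesis using e False by (simp add: tw_def)
  qed
qed

lemma vander_det:
  fixes x :: "nat \<Rightarrow> complex"
  assumes inj: "inj_on x {..<n}"
  shows "det (Matrix.mat n n (\<lambda>(t,r). x t ^ r)) \<noteq> 0"
proof
  let ?W = "Matrix.mat n n (\<lambda>(t,r). x t ^ r)"
  assume "det ?W = 0"
  then obtain v where v: "v \<in> carrier_vec n" "v \<noteq> 0\<^sub>v n" "?W *\<^sub>v v = 0\<^sub>v n"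
    using det_0_iff_vec_prod_zero_field[of ?W n] by auto
  define q where "q = (\<Sum>r<n. monom (v $ r) r)"
  have roots: "poly q (x t) = 0" if t: "t < n" for t
  proof -
    have "(?W *\<^sub>v v) $ t = 0" using v(3) t by simp
    moreover have "(?W *\<^sub>v v) $ t = (\<Sum>r\<in>{0..<n}. x t ^ r * v $ r)"
      using t v(1) by (simp add: scalar_prod_def)
    moreover have "poly q (x t) = (\<Sum>r<n. v $ r * x t ^ r)"
      unfolding q_def by (simp add: poly_sum poly_monom)
    ultimately show ?thesis by (simp add: atLeast0LessThan mult.commute)
  qed
  have n0: "n > 0"
  proof (rule ccontr)
    assume "\<not> n > 0"
    then have "n = 0" by simp
    then show False using v(1,2) by auto
  qed
  have q0: "q = 0"
  proof (rule ccontr)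
    assume "q \<noteq> 0"
    then have c1: "card {y. poly q y = 0} \<le> degree q" by (rule card_poly_roots_bound)
    have "degree q \<le> n - 1"
      unfolding q_def by (rule degree_sum_le) (auto intro: order.trans[OF degree_monom_le])
    then have c2: "degree q < n" using n0 by simp
    have fin: "finite {y. poly q y = 0}" using \<open>q \<noteq> 0\<close> by (rule poly_roots_finite)
    have "x ` {..<n} \<subseteq> {y. poly q y = 0}" using roots by auto
    then have "card (x ` {..<n}) \<le> card {y. poly q y = 0}" using fin by (rule card_mono[rotated])
    moreover have "card (x ` {..<n}) = n" using inj by (simp add: card_image)
    ultimately show False using c1 c2 by simp
  qed
  have "v = 0\<^sub>v n"
  proof (rule eq_vecI)
    fix r assume r: "r < dim_vec (0\<^sub>v n :: complex Matrix.vec)"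
    then have r': "r < n" by simp
    have "coeff q r = (\<Sum>r'<n. (if r' = r then v $ r' else 0))"
      unfolding q_def by (simp add: coeff_sum coeff_monom)
    also have "\<dots> = v $ r" using r' by (simp add: sum.delta)
    finally show "v $ r = 0\<^sub>v n $ r" using q0 r' by simp
  qed (use v(1) in simp)
  then show False using v(2) by simp
qed

lemma prod_list_upt: "prod_list (map f [0..<n]) = (\<Prod>i<n. f i)"
  by (induct n) auto

lemma eigen_det:
  fixes A :: "complex mat" and x :: "nat \<Rightarrow> complex" and lam :: "nat \<Rightarrow> complex"
  assumes A: "A \<in> carrier_mat n n" and inj: "inj_on x {..<n}"
  and eig: "\<And>s t. s < n \<Longrightarrow> t < n \<Longrightarrow> (\<Sum>r<n. A $$ (s,r) * x t ^ r) = x t ^ s * lam t"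
  shows "det A = (\<Prod>t<n. lam t)"
proof -
  define V where "V = Matrix.mat n n (\<lambda>(r,t). x t ^ r)"
  define D where "D = Matrix.mat n n (\<lambda>(i,j). if i = j then lam i else 0)"
  have V: "V \<in> carrier_mat n n" and D: "D \<in> carrier_mat n n" unfolding V_def D_def by auto
  have "A * V = V * D"
  proof (rule eq_matI)
    fix s t assume st: "s < dim_row (V * D)" "t < dim_col (V * D)"
    then have s: "s < n" and t: "t < n" using V D by auto
    have "(A * V) $$ (s,t) = (\<Sum>r\<in>{0..<n}. A $$ (s,r) * x t ^ r)"
      using A s t by (simp add: V_def scalar_prod_def)
    also have "\<dots> = x t ^ s * lam t" using eig[OF s t] by (simp add: atLeast0LessThan)
    also have "\<dots> = (\<Sum>r\<in>{0..<n}. x r ^ s * (if r = t then lam r else 0))"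
      using t by (simp add: if_distrib sum.delta cong: if_cong)
    also have "\<dots> = (V * D) $$ (s,t)"
      using s t by (simp add: V_def D_def scalar_prod_def)
    finally show "(A * V) $$ (s,t) = (V * D) $$ (s,t)" .
  qed (use A V D in auto)
  then have "det A * det V = det V * det D"
  proof -
    assume eq: "A * V = V * D"
    have "det A * det V = det (A * V)" by (rule det_mult[OF A V, symmetric])
    also have "\<dots> = det (V * D)" using eq by simp
    also have "\<dots> = det V * det D" by (rule det_mult[OF V D])
    finally show ?thesis .
  qed
  moreover have "det V \<noteq> 0"
  proof -
    have "V = transpose_mat (Matrix.mat n n (\<lambda>(t,r). x t ^ r))"
      unfolding V_def by (rule eq_matI) auto
    then have "det V = det (Matrix.mat n n (\<lambda>(t,r). x t ^ r))"
      using det_transpose[of "Matrix.mat n n (\<lambda>(t,r). x t ^ r)" n] by simp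
    then show ?thesis using vander_det[OF inj] by simp
  qed
  moreover have "det D = (\<Prod>t<n. lam t)"
  proof -
    have "upper_triangular D" unfolding D_def upper_triangular_def by auto
    then have "det D = prod_list (diag_mat D)" using D by (rule det_upper_triangular)
    also have "\<dots> = (\<Prod>t<n. lam t)" unfolding diag_mat_def D_def
      by (simp add: prod_list_upt)
    finally show ?thesis .
  qed
  ultimately show ?thesis by auto
qed

lemma mk_less: "r < m \<Longrightarrow> q < k \<Longrightarrow> r + m * q < m * (k::nat)"
proof -
  assume "r < m" "q < k"
  then have "r + m * q < m + m * q" by simp
  also have "\<dots> = m * (q + 1)" by simp
  also have "\<dots> \<le> m * k" using \<open>q < k\<close> by (intro mult_le_mono2) simp
  finally show ?thesis .
qed

lemma prod_reindex_mk:
  fixes \<phi> :: "nat \<Rightarrow> 'a::comm_monoid_mult"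
  assumes m: "m > 0"
  shows "(\<Prod>r<m. \<Prod>q<k. \<phi> (r + m * q)) = (\<Prod>i<m*k. \<phi> i)"
proof -
  have "(\<Prod>r<m. \<Prod>q<k. \<phi> (r + m * q)) = (\<Prod>(r,q)\<in>{..<m}\<times>{..<k}. \<phi> (r + m * q))"
    by (simp add: prod.cartesian_product)
  also have "\<dots> = (\<Prod>i<m*k. \<phi> i)"
  proof (rule prod.reindex_bij_witness[of _ "\<lambda>i. (i mod m, i div m)" "\<lambda>(r,q). r + m * q"])
    fix a assume "a \<in> {..<m}\<times>{..<k}"
    then show "(case a of (r, q) \<Rightarrow> r + m * q) \<in> {..<m * k}" by (auto intro: mk_less)
  next
    fix b assume "b \<in> {..<m * k}"
    then show "(b mod m, b div m) \<in> {..<m}\<times>{..<k}" using m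
      by (auto simp: less_mult_imp_div_less mult.commute)
  qed (use m in auto)
  finally show ?thesis .
qed

lemma sum_reindex_mk:
  fixes \<phi> :: "nat \<Rightarrow> 'a::comm_monoid_add"
  assumes m: "m > 0"
  shows "(\<Sum>r<m. \<Sum>q<k. \<phi> (r + m * q)) = (\<Sum>i<m*k. \<phi> i)"
proof -
  have "(\<Sum>r<m. \<Sum>q<k. \<phi> (r + m * q)) = (\<Sum>(r,q)\<in>{..<m}\<times>{..<k}. \<phi> (r + m * q))"
    by (simp add: sum.cartesian_product)
  also have "\<dots> = (\<Sum>i<m*k. \<phi> i)"
  proof (rule sum.reindex_bij_witness[of _ "\<lambda>i. (i mod m, i div m)" "\<lambda>(r,q). r + m * q"])
    fix a assume "a \<in> {..<m}\<times>{..<k}"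
    then show "(case a of (r, q) \<Rightarrow> r + m * q) \<in> {..<m * k}" by (auto intro: mk_less)
  next
    fix b assume "b \<in> {..<m * k}"
    then show "(b mod m, b div m) \<in> {..<m}\<times>{..<k}" using m
      by (auto simp: less_mult_imp_div_less mult.commute)
  qed (use m in auto)
  finally show ?thesis .
qed

definition zeta :: "nat \<Rightarrow> complex" where
  "zeta N = exp (2 * of_real pi * \<i> / of_nat N)"

lemma zeta_pow: "zeta N ^ j = exp (2 * of_real pi * \<i> * of_nat j / of_nat N)"
  unfolding zeta_def exp_of_nat_mult[symmetric] by (simp add: algebra_simps)

lemma zeta_N: "N > 0 \<Longrightarrow> zeta N ^ N = 1"
  unfolding zeta_pow using complex_root_unity_eq_1[of N N] by simp

lemma zeta_inj: "N > 0 \<Longrightarrow> inj_on (\<lambda>j. zeta N ^ j) {..<N}"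
  unfolding zeta_pow inj_on_def using complex_root_unity_eq[of N] by auto

lemma tw_of_int: "of_int (tw n 1 a s r) = tw n 1 (\<lambda>i. of_int (a i)) s r"
  by (simp add: tw_def)

lemma circ_carrier: "circulant n a \<in> carrier_mat n n"
  by (simp add: circulant_def)

lemma pow_mod: fixes u :: complex assumes u: "u ^ k = 1" shows "u ^ i = u ^ (i mod k)"
proof -
  have "u ^ i = u ^ (k * (i div k) + i mod k)" by (metis div_mult_mod_eq mult.commute)
  also have "\<dots> = (u ^ k) ^ (i div k) * u ^ (i mod k)" by (simp only: power_add power_mult)
  also have "\<dots> = u ^ (i mod k)" using u by simp
  finally show ?thesis .
qed

lemma hom_oi: "comm_ring_hom (map_poly (of_int :: int \<Rightarrow> complex))"
  by unfold_locales (auto simp: of_int_poly_hom.hom_add of_int_poly_hom.hom_mult)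

lemma hom_ev: "comm_ring_hom (\<lambda>q. poly q (y::complex))"
  by unfold_locales auto

lemma sum_pow_aux: "(\<Sum>q<k. c q * (\<theta> ^ m) ^ q) * \<theta> ^ r = (\<Sum>q<k. c q * \<theta> ^ (r + m * q))"
  for \<theta> :: complex
  unfolding sum_distrib_right
proof (intro sum.cong refl)
  fix q
  have "\<theta> ^ (r + m * q) = \<theta> ^ r * (\<theta> ^ m) ^ q" by (simp only: power_add power_mult)
  then show "c q * (\<theta> ^ m) ^ q * \<theta> ^ r = c q * \<theta> ^ (r + m * q)" by (simp add: mult_ac)
qed

lemma poly_x_mult: "poly (map_poly of_int ([:0,1:] * q)) (y::complex) = y * poly (map_poly of_int q) y"
proof -
  have "map_poly (of_int :: int \<Rightarrow> complex) ([:0,1:] * q) = map_poly of_int [:0,1:] * map_poly of_int q"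
    by (rule of_int_poly_hom.hom_mult)
  moreover have "map_poly (of_int :: int \<Rightarrow> complex) [:0,1:] = [:0,1:]" by simp
  ultimately show ?thesis by simp
qed

lemma main_incl:
  assumes m: "m > 0" and k: "k > 0"
  shows "circ_dets (m * k) \<subseteq> circ_dets k"
proof
  fix d assume "d \<in> circ_dets (m * k)"
  then obtain a where d: "d = det (circulant (m * k) a)" unfolding circ_dets_def by auto
  define N where "N = m * k"
  have N: "N > 0" using m k by (simp add: N_def)
  define z where "z = zeta N"
  define f where "f = (\<lambda>y::complex. \<Sum>i<N. of_int (a i) * y ^ i)"
  have zN: "z ^ N = 1" using zeta_N[OF N] by (simp add: z_def)
  have zinj: "inj_on (\<lambda>j. z ^ j) {..<N}" using zeta_inj[OF N] by (simp add: z_def)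
  have step1: "of_int d = (\<Prod>i<N. f (z ^ i))"
  proof -
    have "of_int d = det (map_mat of_int (circulant N a) :: complex mat)"
      by (simp add: d N_def of_int_hom.hom_det)
    also have "\<dots> = (\<Prod>i<N. f (z ^ i))"
    proof (rule eigen_det[where x = "\<lambda>i. z ^ i"])
      show "map_mat of_int (circulant N a) \<in> carrier_mat N N" by (simp add: circulant_def)
      show "inj_on (\<lambda>i. z ^ i) {..<N}" by (rule zinj)
      fix s t assume s: "s < N" and t: "t < N"
      have "(\<Sum>r<N. map_mat of_int (circulant N a) $$ (s,r) * (z ^ t) ^ r)
          = (\<Sum>r<N. tw N 1 (\<lambda>i. of_int (a i)) s r * (z ^ t) ^ r)"
      proof (rule sum.cong)
        fix r assume "r \<in> {..<N}"
        then have r: "r < N" by simp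
        have "map_mat of_int (circulant N a) $$ (s,r) = of_int (circulant N a $$ (s,r))"
          using circ_carrier[of N a] s r by simp
        also have "\<dots> = tw N 1 (\<lambda>i. of_int (a i)) s r" by (simp add: circ_tw s r tw_of_int)
        finally have e: "map_mat of_int (circulant N a) $$ (s,r) = tw N 1 (\<lambda>i. of_int (a i)) s r" .
        show "map_mat of_int (circulant N a) $$ (s,r) * (z ^ t) ^ r
          = tw N 1 (\<lambda>i. of_int (a i)) s r * (z ^ t) ^ r" by (simp only: e)
      qed simp
      also have "\<dots> = (z ^ t) ^ s * f (z ^ t)" unfolding f_def
      proof (rule tw_eigen[OF _ s])
        have "(z ^ t) ^ N = (z ^ N) ^ t" by (simp add: power_mult[symmetric] mult.commute)
        then show "(z ^ t) ^ N = 1" using zN by simp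
      qed
      finally show "(\<Sum>r<N. map_mat of_int (circulant N a) $$ (s,r) * (z ^ t) ^ r) = (z ^ t) ^ s * f (z ^ t)" .
    qed
    finally show ?thesis .
  qed
  define g where "g = (\<lambda>r. \<Sum>q<k. monom (a (r + m * q)) q :: int poly)"
  define M where "M = Matrix.mat m m (\<lambda>(s,r). tw m [:0,1:] g s r)"
  define h where "h = det M"
  define w where "w = z ^ m"
  have step2: "poly (map_poly of_int h) (w ^ j) = (\<Prod>s<m. f (z ^ (j + k * s)))" if j: "j < k" for j
  proof -
    define y where "y = w ^ j"
    define G where "G = (\<lambda>r. \<Sum>q<k. of_int (a (r + m * q)) * y ^ q)"
    have Gg: "poly (map_poly of_int (g r)) y = G r" for r
      by (simp add: g_def G_def of_int_poly_hom.hom_sum poly_sum poly_monom)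
    have ent: "poly (map_poly of_int (tw m [:0,1:] g s r)) y = tw m y G s r" for s r
      by (simp only: tw_def Gg[symmetric] poly_x_mult split: if_splits) simp
    have "poly (map_poly of_int h) y = poly (det (map_mat (map_poly of_int) M)) y"
      by (simp add: h_def comm_ring_hom.hom_det[OF hom_oi])
    also have "\<dots> = det (map_mat (\<lambda>q. poly q y) (map_mat (map_poly of_int) M))"
      by (simp add: comm_ring_hom.hom_det[OF hom_ev])
    also have "map_mat (\<lambda>q. poly q y) (map_mat (map_poly of_int) M) = Matrix.mat m m (\<lambda>(s,r). tw m y G s r)"
      by (rule eq_matI) (auto simp: M_def ent)
    also have "det (Matrix.mat m m (\<lambda>(s,r). tw m y G s r)) = (\<Prod>s<m. f (z ^ (j + k * s)))"
    proof (rule eigen_det[where x = "\<lambda>s. z ^ (j + k * s)"])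
      show "Matrix.mat m m (\<lambda>(s,r). tw m y G s r) \<in> carrier_mat m m" by simp
      have lt: "j + k * s < N" if "s < m" for s
        using mk_less[OF j that] by (simp add: N_def mult.commute)
      have i1: "inj_on (\<lambda>s. j + k * s) {..<m}" using k by (auto simp: inj_on_def)
      have i2: "inj_on (\<lambda>i. z ^ i) ((\<lambda>s. j + k * s) ` {..<m})"
        using zinj by (rule inj_on_subset) (auto intro: lt)
      show "inj_on (\<lambda>s. z ^ (j + k * s)) {..<m}"
        using comp_inj_on[OF i1 i2] by (simp add: o_def)
      fix s t assume s: "s < m" and t: "t < m"
      let ?th = "z ^ (j + k * t)"
      have thp: "?th ^ m = y"
      proof -
        have "?th ^ m = z ^ (m * j + N * t)" by (simp add: power_mult[symmetric] algebra_simps N_def)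
        also have "\<dots> = (z ^ m) ^ j * (z ^ N) ^ t" by (simp add: power_add power_mult)
        finally show ?thesis using zN by (simp add: y_def w_def)
      qed
      have "(\<Sum>r<m. Matrix.mat m m (\<lambda>(s,r). tw m y G s r) $$ (s,r) * ?th ^ r)
          = (\<Sum>r<m. tw m y G s r * ?th ^ r)"
        using s by (intro sum.cong) auto
      also have "\<dots> = ?th ^ s * (\<Sum>r<m. G r * ?th ^ r)"
        by (rule tw_eigen[OF thp s])
      also have "(\<Sum>r<m. G r * ?th ^ r) = f ?th"
      proof -
        have "(\<Sum>r<m. G r * ?th ^ r) = (\<Sum>r<m. \<Sum>q<k. of_int (a (r + m * q)) * ?th ^ (r + m * q))"
          unfolding G_def thp[symmetric] sum_pow_aux by (rule refl)
        also have "\<dots> = f ?th" unfolding f_def N_def by (rule sum_reindex_mk[OF m])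
        finally show ?thesis .
      qed
      finally show "(\<Sum>r<m. Matrix.mat m m (\<lambda>(s,r). tw m y G s r) $$ (s,r) * ?th ^ r) = ?th ^ s * f ?th" .
    qed
    finally show ?thesis by (simp add: y_def)
  qed
  define D where "D = degree h"
  define b where "b = (\<lambda>q. \<Sum>i\<in>{i\<in>{..D}. i mod k = q}. coeff h i)"
  have step3: "(\<Sum>q<k. of_int (b q) * u ^ q) = poly (map_poly of_int h) u" if u: "u ^ k = 1" for u :: complex
  proof -
    have "poly (map_poly of_int h) u = (\<Sum>i\<le>D. of_int (coeff h i) * u ^ i)"
      by (simp add: poly_altdef D_def coeff_map_poly)
    also have "\<dots> = (\<Sum>i\<le>D. of_int (coeff h i) * u ^ (i mod k))"
      using pow_mod[OF u] by simp
    also have "\<dots> = (\<Sum>q<k. \<Sum>i\<in>{i\<in>{..D}. i mod k = q}. of_int (coeff h i) * u ^ (i mod k))"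
      by (rule sum.group[symmetric]) (auto simp: k)
    also have "\<dots> = (\<Sum>q<k. of_int (b q) * u ^ q)"
      unfolding b_def of_int_sum sum_distrib_right by (intro sum.cong refl) auto
    finally show ?thesis by simp
  qed
  have winj: "inj_on (\<lambda>j. w ^ j) {..<k}"
  proof -
    have i1: "inj_on (\<lambda>j. m * j) {..<k}" using m by (auto simp: inj_on_def)
    have i2: "inj_on (\<lambda>i. z ^ i) ((\<lambda>j. m * j) ` {..<k})"
      using zinj by (rule inj_on_subset) (use m in \<open>auto simp: N_def\<close>)
    show ?thesis using comp_inj_on[OF i1 i2] by (simp add: o_def w_def power_mult)
  qed
  have step4: "of_int (det (circulant k b)) = (\<Prod>j<k. poly (map_poly of_int h) (w ^ j))"
  proof -
    have "of_int (det (circulant k b)) = det (map_mat of_int (circulant k b) :: complex mat)"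
      by (simp add: of_int_hom.hom_det)
    also have "\<dots> = (\<Prod>j<k. poly (map_poly of_int h) (w ^ j))"
    proof (rule eigen_det[where x = "\<lambda>j. w ^ j"])
      show "map_mat of_int (circulant k b) \<in> carrier_mat k k" by (simp add: circulant_def)
      show "inj_on (\<lambda>j. w ^ j) {..<k}" by (rule winj)
      fix s t assume s: "s < k" and t: "t < k"
      have wk: "(w ^ t) ^ k = 1"
      proof -
        have "(w ^ t) ^ k = (z ^ N) ^ t" by (simp add: w_def N_def power_mult[symmetric] algebra_simps)
        then show ?thesis using zN by simp
      qed
      have "(\<Sum>r<k. map_mat of_int (circulant k b) $$ (s,r) * (w ^ t) ^ r)
          = (\<Sum>r<k. tw k 1 (\<lambda>i. of_int (b i)) s r * (w ^ t) ^ r)"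
      proof (rule sum.cong)
        fix r assume "r \<in> {..<k}"
        then have r: "r < k" by simp
        have "map_mat of_int (circulant k b) $$ (s,r) = of_int (circulant k b $$ (s,r))"
          using circ_carrier[of k b] s r by simp
        also have "\<dots> = tw k 1 (\<lambda>i. of_int (b i)) s r" by (simp add: circ_tw s r tw_of_int)
        finally have e: "map_mat of_int (circulant k b) $$ (s,r) = tw k 1 (\<lambda>i. of_int (b i)) s r" .
        show "map_mat of_int (circulant k b) $$ (s,r) * (w ^ t) ^ r
          = tw k 1 (\<lambda>i. of_int (b i)) s r * (w ^ t) ^ r" by (simp only: e)
      qed simp
      also have "\<dots> = (w ^ t) ^ s * (\<Sum>r<k. of_int (b r) * (w ^ t) ^ r)"
        by (rule tw_eigen[OF wk s])
      also have "(\<Sum>r<k. of_int (b r) * (w ^ t) ^ r) = poly (map_poly of_int h) (w ^ t)"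
        by (rule step3[OF wk])
      finally show "(\<Sum>r<k. map_mat of_int (circulant k b) $$ (s,r) * (w ^ t) ^ r) = (w ^ t) ^ s * poly (map_poly of_int h) (w ^ t)" .
    qed
    finally show ?thesis .
  qed
  have "of_int (det (circulant k b)) = (\<Prod>j<k. \<Prod>s<m. f (z ^ (j + k * s)))"
    using step4 step2 by simp
  also have "\<dots> = (\<Prod>i<k*m. f (z ^ i))" by (rule prod_reindex_mk[OF k])
  also have "\<dots> = (of_int d :: complex)" using step1 by (simp add: N_def mult.commute)
  finally have "det (circulant k b) = d" by (simp only: of_int_eq_iff)
  then show "d \<in> circ_dets k" unfolding circ_dets_def by auto
qed

theorem proposition1p4:
  fixes p t :: nat
  assumes "prime p" and "t \<ge> 2"
  shows "circ_dets (p ^ t) \<subseteq> circ_dets (p ^ (t - 1))"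
proof -
  have p: "p > 0" using assms(1) prime_gt_0_nat by blast
  have "p ^ t = p * p ^ (t - 1)" using assms(2) by (cases t) auto
  moreover have "p ^ (t - 1) > 0" using p by simp
  ultimately show ?thesis using main_incl[OF p] by simp
qed

end
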